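(* Let $P_1,\dots,P_T\in\mathbb{R}^{d\times d}$ be orthogonal projections and let $\tau(1),\tau(2),\dots$ be i.i.d. uniform on $\{1,\dots,T\}$. Let $\bar r=\frac1T\sum_{m=1}^T(d-\operatorname{rank}P_m)$. Then for every $k\ge1$, $$\mathbb{E}_\tau\Big[\frac1T\sum_{m=1}^T\big\|(I-P_m)P_{\tau(k)}\cdots P_{\tau(1)}\big\|^2\Big]\le \frac{1}{k}\cdot\frac1T\sum_{m=1}^T\operatorname{rank}(P_m)=\frac{d-\bar r}{k}.$$
   Context: $\|\cdot\|$ denotes the spectral norm. (In the application, $P_m=I-X_m^+X_m$ is the projection onto $\ker X_m$, so $\operatorname{rank}P_m=d-\operatorname{rank}X_m$ and the bound reads $(d-r_{\mathrm{avg}})/k$ with $r_{\mathrm{avg}}$ the average rank of the data matrices.) *)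

theory Defs
  imports "HOL-Analysis.Analysis"
begin

definition spec_norm :: "real^'n^'m \<Rightarrow> real" where
  "spec_norm A = onorm (\<lambda>x. A *v x)"

definition orth_proj :: "real^'n^'n \<Rightarrow> bool" where
  "orth_proj P \<longleftrightarrow> P ** P = P \<and> transpose P = P"

text \<open>Product P (tau (k-1)) ** ... ** P (tau 0) (indices shifted to start at 0).\<close>
fun proj_prod :: "(nat \<Rightarrow> real^'n^'n) \<Rightarrow> (nat \<Rightarrow> nat) \<Rightarrow> nat \<Rightarrow> real^'n^'n" where
  "proj_prod P tau 0 = mat 1"
| "proj_prod P tau (Suc j) = P (tau j) ** proj_prod P tau j"

end

theory Submission imports Defs begin

definition fr :: "real^'n^'n \<Rightarrow> real" where
  "fr A = (\<Sum>i\<in>UNIV. (norm (A *v axis i 1))\<^sup>2)"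

lemma normsq_vec: "(norm (v::real^'n))\<^sup>2 = (\<Sum>i\<in>UNIV. (v$i)\<^sup>2)"
  by (simp only: power2_norm_eq_inner) (simp add: inner_vec_def power2_eq_square)

lemma orth_idem: "orth_proj P \<Longrightarrow> P *v (P *v x) = P *v x"
  unfolding orth_proj_def by (simp add: matrix_vector_mul_assoc)

lemma orth_sym: "orth_proj P \<Longrightarrow> (P *v x) \<bullet> y = x \<bullet> (P *v y)"
proof -
  assume "orth_proj P"
  then have "transpose P = P" by (simp add: orth_proj_def)
  then have "P *v x = x v* P" by (metis transpose_matrix_vector)
  then show ?thesis by (simp add: dot_lmul_matrix)
qed

lemma orth_pyth: assumes "orth_proj P"
  shows "(norm (P *v v))\<^sup>2 + (norm ((mat 1 - P) *v v))\<^sup>2 = (norm v)\<^sup>2"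
proof -
  have e: "(mat 1 - P) *v v = v - P *v v" by (simp add: matrix_vector_mult_diff_rdistrib)
  have "(P *v v) \<bullet> (v - P *v v) = 0"
    using orth_sym[OF assms, of v "P *v v"] orth_idem[OF assms, of v]
    by (simp add: inner_diff_right inner_commute)
  then have "(norm (P *v v + (v - P *v v)))\<^sup>2 = (norm (P *v v))\<^sup>2 + (norm (v - P *v v))\<^sup>2"
    using norm_add_Pythagorean[of "P *v v" "v - P *v v"] by (simp add: orthogonal_def)
  then show ?thesis by (simp add: e)
qed

lemma fr_split: assumes "orth_proj P"
  shows "fr (P ** A) + fr ((mat 1 - P) ** A) = fr A"
  unfolding fr_def sum.distrib[symmetric]
  by (rule sum.cong) (auto simp: matrix_vector_mul_assoc[symmetric] orth_pyth[OF assms])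

lemma spec_nonneg: "spec_norm A \<ge> 0"
  unfolding spec_norm_def by (rule onorm_pos_le) simp

lemma spec_le_fr: "(spec_norm (A::real^'n^'n))\<^sup>2 \<le> fr A"
proof -
  have rows: "(\<Sum>j\<in>UNIV. (norm (A$j))\<^sup>2) = fr A"
    unfolding fr_def normsq_vec
    by (subst sum.swap) (simp add: matrix_vector_mult_basis column_def)
  have "norm (A *v x) \<le> sqrt (fr A) * norm x" for x
  proof -
    have frn: "fr A \<ge> 0" unfolding fr_def by (simp add: sum_nonneg)
    have "(norm (A *v x))\<^sup>2 = (\<Sum>j\<in>UNIV. ((A$j) \<bullet> x)\<^sup>2)"
      by (simp add: normsq_vec matrix_vector_mul_component)
    also have "\<dots> \<le> (\<Sum>j\<in>UNIV. (norm (A$j))\<^sup>2 * (norm x)\<^sup>2)"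
    proof (rule sum_mono)
      fix j
      have "\<bar>A$j \<bullet> x\<bar> \<le> norm (A$j) * norm x" by (rule Cauchy_Schwarz_ineq2)
      then have "\<bar>A$j \<bullet> x\<bar>\<^sup>2 \<le> (norm (A$j) * norm x)\<^sup>2"
        by (rule power_mono) simp
      then show "((A$j) \<bullet> x)\<^sup>2 \<le> (norm (A$j))\<^sup>2 * (norm x)\<^sup>2"
        by (simp add: power_mult_distrib)
    qed
    also have "\<dots> = fr A * (norm x)\<^sup>2" by (simp add: sum_distrib_right[symmetric] rows)
    also have "\<dots> = (sqrt (fr A) * norm x)\<^sup>2"
      using frn by (simp add: power_mult_distrib)
    finally show ?thesis
      by (rule power2_le_imp_le) (simp add: rows[symmetric] sum_nonneg)
  qed
  then have "spec_norm A \<le> sqrt (fr A)" unfolding spec_norm_def by (rule onorm_le)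
  then have "(spec_norm A)\<^sup>2 \<le> (sqrt (fr A))\<^sup>2" by (rule power_mono[OF _ spec_nonneg])
  also have "\<dots> = fr A" using rows by (simp add: rows[symmetric] sum_nonneg)
  finally show ?thesis .
qed

lemma spec_proj_le1: assumes "orth_proj P" shows "spec_norm P \<le> 1"
  unfolding spec_norm_def
proof (rule onorm_le)
  fix x
  have "(norm (P *v x))\<^sup>2 \<le> (norm x)\<^sup>2" using orth_pyth[OF assms, of x] zero_le_power2[of "norm ((mat 1 - P) *v x)"] by linarith
  then show "norm (P *v x) \<le> 1 * norm x" using power2_le_imp_le[of "norm (P *v x)" "norm x"] by simp
qed

lemma spec_mult_proj: assumes "orth_proj Q" shows "spec_norm (A ** Q) \<le> spec_norm (A::real^'n^'n)"
proof -
  have "(\<lambda>x. (A ** Q) *v x) = (\<lambda>x. A *v x) \<circ> (\<lambda>x. Q *v x)"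
    by (auto simp: matrix_vector_mul_assoc)
  then have "spec_norm (A ** Q) \<le> spec_norm A * spec_norm Q"
    unfolding spec_norm_def by (metis onorm_compose matrix_vector_mul_bounded_linear)
  also have "\<dots> \<le> spec_norm A"
    using spec_proj_le1[OF assms] spec_nonneg[of A] by (simp add: mult_left_le)
  finally show ?thesis .
qed


lemma fr_proj_le_rank: assumes "orth_proj P" shows "fr P \<le> real (rank P)"
proof -
  let ?S = "range (\<lambda>x. P *v x)"
  have sub: "subspace ?S"
    by (metis linear_subspace_image subspace_UNIV matrix_vector_mul_linear)
  obtain B where B: "B \<subseteq> ?S" "pairwise orthogonal B" "\<And>x. x \<in> B \<Longrightarrow> norm x = 1"
    "independent B" "card B = dim ?S" "span B = ?S"
    using orthonormal_basis_subspace[OF sub] by metis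
  have fin: "finite B" using B(4) independent_imp_finite by blast
  have Pb: "P *v b = b" if "b \<in> B" for b
    using B(1) that orth_idem[OF assms] by auto
  have col: "(norm (P *v axis i 1))\<^sup>2 = (\<Sum>b\<in>B. (b$i)\<^sup>2)" for i
  proof -
    let ?v = "P *v axis i 1"
    have "?v \<in> span B" using B(6) by auto
    then have ex: "(\<Sum>b\<in>B. (?v \<bullet> b) *\<^sub>R b) = ?v"
      using orthonormal_basis_expand[OF B(2) B(3) _ fin] by blast
    have ip: "?v \<bullet> b = b$i" if "b \<in> B" for b
      using orth_sym[OF assms, of "axis i 1" b] Pb[OF that] by (simp add: inner_axis')
    have "(norm ?v)\<^sup>2 = ?v \<bullet> (\<Sum>b\<in>B. (?v \<bullet> b) *\<^sub>R b)"
      by (simp only: ex power2_norm_eq_inner)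
    also have "\<dots> = (\<Sum>b\<in>B. (?v \<bullet> b) * (?v \<bullet> b))"
      by (simp add: inner_sum_right)
    also have "\<dots> = (\<Sum>b\<in>B. (b$i)\<^sup>2)"
      by (rule sum.cong) (simp_all add: ip power2_eq_square)
    finally show ?thesis .
  qed
  have "fr P = (\<Sum>b\<in>B. \<Sum>i\<in>UNIV. (b$i)\<^sup>2)"
    unfolding fr_def col by (rule sum.swap)
  also have "\<dots> = (\<Sum>b\<in>B. 1)"
    by (rule sum.cong) (simp_all add: normsq_vec[symmetric] B(3))
  also have "\<dots> = real (rank P)" using B(5) by (simp add: rank_dim_range)
  finally show ?thesis by simp
qed

lemma proj_prod_cong: "(\<And>i. i < j \<Longrightarrow> tau i = tau' i) \<Longrightarrow> proj_prod P tau j = proj_prod P tau' j"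
  by (induction j) auto

lemma proj_prod_front: "proj_prod P tau (Suc j) = proj_prod P (tau \<circ> Suc) j ** P (tau 0)"
proof (induction j arbitrary: tau)
  case 0 then show ?case by simp
next
  case (Suc j)
  have "proj_prod P tau (Suc (Suc j)) = P (tau (Suc j)) ** (proj_prod P (tau \<circ> Suc) j ** P (tau 0))"
    using Suc by (simp add: o_def)
  then show ?case by (simp add: matrix_mul_assoc o_def)
qed

lemma sum_PiE_back:
  fixes f :: "(nat \<Rightarrow> nat) \<Rightarrow> real"
  shows "(\<Sum>tau\<in>{..<Suc j} \<rightarrow>\<^sub>E S. f tau) = (\<Sum>s\<in>{..<j} \<rightarrow>\<^sub>E S. \<Sum>m\<in>S. f (s(j := m)))"
proof -
  have eq: "{..<Suc j} \<rightarrow>\<^sub>E S = (\<lambda>(y, g). g(j := y)) ` (S \<times> ({..<j} \<rightarrow>\<^sub>E S))"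
    by (simp add: lessThan_Suc PiE_insert_eq)
  have inj: "inj_on (\<lambda>(y, g). g(j := y)) (S \<times> ({..<j} \<rightarrow>\<^sub>E S))"
  proof (rule inj_onI, clarify)
    fix y g y' g'
    assume a: "g \<in> {..<j} \<rightarrow>\<^sub>E S" "g' \<in> {..<j} \<rightarrow>\<^sub>E S" "g(j := y) = g'(j := y')"
    then have "y = y'" by (metis fun_upd_same)
    moreover have "g = g'"
    proof
      fix i show "g i = g' i"
        using a by (cases "i = j") (auto simp: PiE_def extensional_def dest: fun_cong[of _ _ i])
    qed
    ultimately show "y = y' \<and> g = g'" by simp
  qed
  have "(\<Sum>tau\<in>{..<Suc j} \<rightarrow>\<^sub>E S. f tau) = (\<Sum>p\<in>S \<times> ({..<j} \<rightarrow>\<^sub>E S). f ((snd p)(j := fst p)))"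
    unfolding eq by (subst sum.reindex[OF inj]) (simp add: case_prod_beta)
  also have "\<dots> = (\<Sum>m\<in>S. \<Sum>s\<in>{..<j} \<rightarrow>\<^sub>E S. f (s(j := m)))"
    by (simp add: sum.cartesian_product split_beta)
  also have "\<dots> = (\<Sum>s\<in>{..<j} \<rightarrow>\<^sub>E S. \<Sum>m\<in>S. f (s(j := m)))"
    by (rule sum.swap)
  finally show ?thesis .
qed

definition cons_fn :: "nat \<Rightarrow> (nat \<Rightarrow> nat) \<Rightarrow> nat \<Rightarrow> nat" where
  "cons_fn m s = (\<lambda>i. case i of 0 \<Rightarrow> m | Suc i' \<Rightarrow> s i')"

lemma sum_PiE_front:
  fixes f :: "(nat \<Rightarrow> nat) \<Rightarrow> real"
  shows "(\<Sum>tau\<in>{..<Suc j} \<rightarrow>\<^sub>E S. f tau) = (\<Sum>m\<in>S. \<Sum>s\<in>{..<j} \<rightarrow>\<^sub>E S. f (cons_fn m s))"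
proof -
  have "(\<Sum>m\<in>S. \<Sum>s\<in>{..<j} \<rightarrow>\<^sub>E S. f (cons_fn m s)) = (\<Sum>p\<in>S \<times> ({..<j} \<rightarrow>\<^sub>E S). f (cons_fn (fst p) (snd p)))"
    by (simp add: sum.cartesian_product split_beta)
  also have "\<dots> = (\<Sum>tau\<in>{..<Suc j} \<rightarrow>\<^sub>E S. f tau)"
  proof (rule sum.reindex_bij_witness[where i = "\<lambda>tau. (tau 0, tau \<circ> Suc)" and j = "\<lambda>p. cons_fn (fst p) (snd p)"])
    fix p assume "p \<in> S \<times> ({..<j} \<rightarrow>\<^sub>E S)"
    then show "(cons_fn (fst p) (snd p) 0, cons_fn (fst p) (snd p) \<circ> Suc) = p"
      by (auto simp: cons_fn_def o_def)
  next
    fix p assume p: "p \<in> S \<times> ({..<j} \<rightarrow>\<^sub>E S)"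
    show "cons_fn (fst p) (snd p) \<in> {..<Suc j} \<rightarrow>\<^sub>E S"
      using p by (auto simp: cons_fn_def PiE_def extensional_def Pi_def split: nat.splits)
  next
    fix tau assume t: "tau \<in> {..<Suc j} \<rightarrow>\<^sub>E S"
    show "cons_fn (fst (tau 0, tau \<circ> Suc)) (snd (tau 0, tau \<circ> Suc)) = tau"
      by (auto simp: cons_fn_def split: nat.splits)
    show "(tau 0, tau \<circ> Suc) \<in> S \<times> ({..<j} \<rightarrow>\<^sub>E S)"
      using t by (auto simp: PiE_def extensional_def Pi_def)
  qed simp
  finally show ?thesis by simp
qed

lemma seq_lemma:
  fixes al be ga :: "nat \<Rightarrow> real"
  assumes "\<And>j. j \<ge> 1 \<Longrightarrow> al (Suc j) \<le> al j"
    and "\<And>j. j \<ge> 1 \<Longrightarrow> al j \<le> be j"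
    and "\<And>j. j \<ge> 1 \<Longrightarrow> ga (Suc j) = ga j - be j"
    and "\<And>j. ga j \<ge> 0"
    and "k \<ge> 1"
  shows "real k * al k \<le> ga 1"
proof -
  have "real k * al k + ga (Suc k) \<le> ga 1" using \<open>k \<ge> 1\<close>
  proof (induction k rule: nat_induct_at_least)
    case base then show ?case using assms(2,3)[of 1] by simp
  next
    case (Suc k)
    have "real (Suc k) * al (Suc k) + ga (Suc (Suc k))
        = real k * al (Suc k) + al (Suc k) + ga (Suc k) - be (Suc k)"
      using assms(3)[of "Suc k"] Suc by (simp add: algebra_simps)
    also have "\<dots> \<le> real k * al k + ga (Suc k)"
    proof -
      have "real k * al (Suc k) \<le> real k * al k"
        using assms(1)[of k] Suc by (intro mult_left_mono) auto
      then show ?thesis using assms(2)[of "Suc k"] by linarith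
    qed
    finally show ?case using Suc by simp
  qed
  then show ?thesis using assms(4)[of "Suc k"] by simp
qed


theorem mainTheorem8:
  fixes P :: "nat \<Rightarrow> real^'n^'n" and T k :: nat
  assumes "T \<ge> 1"
    and "\<And>m. m < T \<Longrightarrow> orth_proj (P m)"
    and "k \<ge> 1"
  shows "(1 / real T ^ k) *
           (\<Sum>tau \<in> {..<k} \<rightarrow>\<^sub>E {..<T}.
              (1 / real T) * (\<Sum>m<T. (spec_norm ((mat 1 - P m) ** proj_prod P tau k))\<^sup>2))
         \<le> (1 / real k) * ((1 / real T) * (\<Sum>m<T. real (rank (P m))))
       \<and> (1 / real k) * ((1 / real T) * (\<Sum>m<T. real (rank (P m))))
         = (real CARD('n) - (1 / real T) * (\<Sum>m<T. real CARD('n) - real (rank (P m)))) / real k"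
proof
  have Tpos: "real T > 0" using assms(1) by simp
  define a where "a j = (\<Sum>tau \<in> {..<j} \<rightarrow>\<^sub>E {..<T}. \<Sum>m<T. (spec_norm ((mat 1 - P m) ** proj_prod P tau j))\<^sup>2)" for j
  define b where "b j = (\<Sum>tau \<in> {..<j} \<rightarrow>\<^sub>E {..<T}. \<Sum>m<T. fr ((mat 1 - P m) ** proj_prod P tau j))" for j
  define g where "g j = (\<Sum>tau \<in> {..<j} \<rightarrow>\<^sub>E {..<T}. fr (proj_prod P tau j))" for j
  define R where "R = (\<Sum>m<T. real (rank (P m)))"
  have F1: "a j \<le> b j" for j
    unfolding a_def b_def by (intro sum_mono spec_le_fr)
  have F2: "g (Suc j) = real T * g j - b j" for j
  proof -
    have "g (Suc j) = (\<Sum>s\<in>{..<j} \<rightarrow>\<^sub>E {..<T}. \<Sum>m<T. fr (proj_prod P (s(j := m)) (Suc j)))"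
      unfolding g_def by (rule sum_PiE_back)
    also have "\<dots> = (\<Sum>s\<in>{..<j} \<rightarrow>\<^sub>E {..<T}. \<Sum>m<T. fr (proj_prod P s j) - fr ((mat 1 - P m) ** proj_prod P s j))"
    proof (intro sum.cong refl)
      fix s m assume "m \<in> {..<T}"
      then have o: "orth_proj (P m)" using assms(2) by simp
      have "proj_prod P (s(j := m)) (Suc j) = P m ** proj_prod P s j"
        using proj_prod_cong[of j "s(j := m)" s P] by simp
      then show "fr (proj_prod P (s(j := m)) (Suc j)) = fr (proj_prod P s j) - fr ((mat 1 - P m) ** proj_prod P s j)"
        using fr_split[OF o, of "proj_prod P s j"] by simp
    qed
    also have "\<dots> = real T * g j - b j"
      unfolding g_def b_def by (simp add: sum_subtractf sum_distrib_left)
    finally show ?thesis .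
  qed
  have F3: "a (Suc j) \<le> real T * a j" for j
  proof -
    have "a (Suc j) = (\<Sum>m<T. \<Sum>s\<in>{..<j} \<rightarrow>\<^sub>E {..<T}. \<Sum>m'<T. (spec_norm ((mat 1 - P m') ** proj_prod P (cons_fn m s) (Suc j)))\<^sup>2)"
      unfolding a_def by (rule sum_PiE_front)
    also have "\<dots> \<le> (\<Sum>m<T. \<Sum>s\<in>{..<j} \<rightarrow>\<^sub>E {..<T}. \<Sum>m'<T. (spec_norm ((mat 1 - P m') ** proj_prod P s j))\<^sup>2)"
    proof (intro sum_mono)
      fix m s m' assume "m \<in> {..<T}"
      then have o: "orth_proj (P m)" using assms(2) by simp
      have c: "cons_fn m s \<circ> Suc = s" by (auto simp: cons_fn_def)
      have "proj_prod P (cons_fn m s) (Suc j) = proj_prod P s j ** P m"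
        using proj_prod_front[of P "cons_fn m s" j] c by (simp add: cons_fn_def)
      then have "(mat 1 - P m') ** proj_prod P (cons_fn m s) (Suc j) = ((mat 1 - P m') ** proj_prod P s j) ** P m"
        by (simp add: matrix_mul_assoc)
      then have "spec_norm ((mat 1 - P m') ** proj_prod P (cons_fn m s) (Suc j)) \<le> spec_norm ((mat 1 - P m') ** proj_prod P s j)"
        using spec_mult_proj[OF o] by simp
      then show "(spec_norm ((mat 1 - P m') ** proj_prod P (cons_fn m s) (Suc j)))\<^sup>2 \<le> (spec_norm ((mat 1 - P m') ** proj_prod P s j))\<^sup>2"
        by (intro power_mono spec_nonneg)
    qed
    also have "\<dots> = real T * a j" unfolding a_def by simp
    finally show ?thesis .
  qed
  have F4: "g 1 \<le> R"
  proof -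
    have "g 1 = (\<Sum>s\<in>{..<0} \<rightarrow>\<^sub>E {..<T}. \<Sum>m<T. fr (proj_prod P (s(0 := m)) (Suc 0)))"
      unfolding g_def using sum_PiE_back[of _ 0] by simp
    also have "\<dots> = (\<Sum>m<T. fr (P m))" by simp
    also have "\<dots> \<le> R" unfolding R_def
      using assms(2) by (intro sum_mono fr_proj_le_rank) auto
    finally show ?thesis .
  qed
  have gnn: "g j \<ge> 0" for j unfolding g_def fr_def by (intro sum_nonneg) auto
  define al where "al j = a j / real T ^ (j+1)" for j
  define be where "be j = b j / real T ^ (j+1)" for j
  define ga where "ga j = g j / real T ^ j" for j
  have "real k * al k \<le> ga 1"
  proof (rule seq_lemma[OF _ _ _ _ assms(3)])
    fix j :: nat
    show "al (Suc j) \<le> al j" unfolding al_def using F3[of j] Tpos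
      by (simp add: field_simps)
    show "al j \<le> be j" unfolding al_def be_def using F1[of j] Tpos
      by (simp add: divide_right_mono)
    show "ga (Suc j) = ga j - be j" unfolding ga_def be_def using F2[of j] Tpos
      by (simp add: field_simps)
    show "ga j \<ge> 0" unfolding ga_def using gnn Tpos by simp
  qed
  moreover have "ga 1 \<le> R / real T" unfolding ga_def using F4 Tpos by (simp add: divide_right_mono)
  ultimately have "real k * al k \<le> R / real T" by linarith
  then have "al k \<le> (1 / real k) * ((1 / real T) * R)"
  proof -
    have kp: "real k > 0" using assms(3) by simp
    have "al k = (real k * al k) / real k" using kp by simp
    also have "\<dots> \<le> (R / real T) / real k" using kp \<open>real k * al k \<le> R / real T\<close>
      by (intro divide_right_mono) auto
    finally show ?thesis by (simp add: mult.commute)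
  qed
  moreover have "(1 / real T ^ k) *
           (\<Sum>tau \<in> {..<k} \<rightarrow>\<^sub>E {..<T}.
              (1 / real T) * (\<Sum>m<T. (spec_norm ((mat 1 - P m) ** proj_prod P tau k))\<^sup>2)) = al k"
    unfolding al_def a_def by (simp add: sum_distrib_left[symmetric] sum_divide_distrib[symmetric] divide_divide_eq_left mult.commute)
  ultimately show "(1 / real T ^ k) *
           (\<Sum>tau \<in> {..<k} \<rightarrow>\<^sub>E {..<T}.
              (1 / real T) * (\<Sum>m<T. (spec_norm ((mat 1 - P m) ** proj_prod P tau k))\<^sup>2))
         \<le> (1 / real k) * ((1 / real T) * (\<Sum>m<T. real (rank (P m))))"
    unfolding R_def by simp
next
  have Tpos: "real T > 0" using assms(1) by simp
  show "(1 / real k) * ((1 / real T) * (\<Sum>m<T. real (rank (P m))))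
         = (real CARD('n) - (1 / real T) * (\<Sum>m<T. real CARD('n) - real (rank (P m)))) / real k"
    using Tpos by (simp add: sum_subtractf field_simps)
qed

end
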